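(* In the SMA-DP-SGD setting below, fix an iteration $t$ and a realizable global prior private release history $\mathcal H_t$. Let $\varepsilon_{\mathrm{SGM}}(\lambda_{\mathrm R};q,\sigma)$ denote any valid Rényi-DP upper bound at order $\lambda_{\mathrm R}>1$ for the Poisson-subsampled Gaussian mechanism with subsampling probability $q$ and noise-to-sensitivity ratio $\sigma$, and define $$\sigma_{\mathrm{eff},t}=\frac{1}{\beta\left(\sum_{g=1}^G\sigma_{t,g}^{-2}\right)^{1/2}}.$$ Then the joint release $$\tilde s_t=r_t(D;m_t,\mathcal H_t)+Z_t,\qquad Z_t\sim\mathcal N(0,\Sigma_t),$$ where $m_t$ is a Poisson mask with probability $q_t$, satisfies $\left(\lambda_{\mathrm R},\varepsilon_{\mathrm{SGM}}(\lambda_{\mathrm R};q_t,\sigma_{\mathrm{eff},t})\right)$-RDP for every $\lambda_{\mathrm R}>1$.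
   Context: SMA-DP-SGD setting: dataset $D=\{x_1,\dots,x_N\}$; adjacency is add/remove of one example. Parameters are partitioned into groups $g=1,\dots,G$ (dimension $d_g$, identity $I_g$), with clipping norms $C^{(g)}>0$, noise multipliers $\sigma_{t,g}>0$, and fixed mixing coefficient $\beta\in(0,1]$. At step $t$, a Poisson mask $m_t=(m_{t,1},\dots,m_{t,N})$ is drawn with $m_{t,i}\sim\mathrm{Bernoulli}(q_t)$ independently, and the same mask is used for all groups. For each group, $s_t^{(g)}(D;m_t)=\sum_i m_{t,i}\bar g_t^{(g)}(x_i)$, where $\bar g_t^{(g)}(x_i)=g_t^{(g)}(x_i)/\max(1,\|g_t^{(g)}(x_i)\|_2/C^{(g)})$ is the clipped per-example gradient of group $g$ at the current model $\theta_t$. The group query is $r_t^{(g)}(D;m_t,\mathcal H_t)=\beta s_t^{(g)}(D;m_t)+b_t^{(g)}(\mathcal H_t)$, where the memory branch $b_t^{(g)}$ is a deterministic function of the global prior private release history $\mathcal H_t$ (all previous noisy releases $\tilde s_r^{(h)}$, $r<t$), of the model state induced by them, and of public hyperparameters, and does not depend on the current data. The joint query is $r_t=(r_t^{(1)},\dots,r_t^{(G)})$ and $\Sigma_t=\operatorname{diag}(\sigma_{t,1}^2(C^{(1)})^2I_1,\ldots,\sigma_{t,G}^2(C^{(G)})^2I_G)$. *)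

theory Defs
  imports "HOL-Analysis.Analysis" "HOL-Probability.Probability"
begin

definition remove_at :: "nat \<Rightarrow> 'x list \<Rightarrow> 'x list" where
  "remove_at i D = take i D @ drop (Suc i) D"

definition adjacent :: "'x list \<Rightarrow> 'x list \<Rightarrow> bool" where
  "adjacent D D' \<longleftrightarrow>
     (\<exists>i < length D. D' = remove_at i D) \<or> (\<exists>i < length D'. D = remove_at i D')"

definition poisson_mask :: "real \<Rightarrow> nat \<Rightarrow> (nat \<Rightarrow> bool) pmf" where
  "poisson_mask q N = Pi_pmf {..<N} False (\<lambda>_. bernoulli_pmf q)"

definition gauss_dens :: "real^'n::finite \<Rightarrow> ('n \<Rightarrow> real) \<Rightarrow> real^'n \<Rightarrow> real" where
  "gauss_dens mu s y = (\<Prod>i\<in>UNIV. normal_density (mu $ i) (s i) (y $ i))"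

text \<open>Density of the output mean(m) + Z, m ~ pm, Z ~ N(0, diag(s^2)).\<close>
definition mix_dens ::
  "'m pmf \<Rightarrow> ('m \<Rightarrow> real^'n::finite) \<Rightarrow> ('n \<Rightarrow> real) \<Rightarrow> real^'n \<Rightarrow> real" where
  "mix_dens pm mean s y = measure_pmf.expectation pm (\<lambda>m. gauss_dens (mean m) s y)"

definition masked_sum :: "('x \<Rightarrow> real^'n::finite) \<Rightarrow> 'x list \<Rightarrow> (nat \<Rightarrow> bool) \<Rightarrow> real^'n" where
  "masked_sum v D m = (\<Sum>i<length D. if m i then v (D ! i) else 0)"

definition renyi_div :: "real \<Rightarrow> ('a \<Rightarrow> real) \<Rightarrow> ('a \<Rightarrow> real) \<Rightarrow> 'a measure \<Rightarrow> ereal" where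
  "renyi_div lam p q mu =
     (let I = (\<integral>\<^sup>+ x. ennreal (p x powr lam * q x powr (1 - lam)) \<partial>mu)
      in if I = \<top> then \<infinity> else ereal (ln (enn2real I) / (lam - 1)))"

text \<open>A mechanism maps a dataset to the density of its output distribution on real^'n.\<close>
definition rdp :: "('x list \<Rightarrow> real^'n::finite \<Rightarrow> real) \<Rightarrow> real \<Rightarrow> real \<Rightarrow> bool" where
  "rdp mech lam eps \<longleftrightarrow>
     (\<forall>D D'. adjacent D D' \<longrightarrow> renyi_div lam (mech D) (mech D') lborel \<le> ereal eps)"

text \<open>Sensitivity-1 per-example contributions f(x) (norm <= 1), Poisson rate q,
  isotropic Gaussian noise of standard deviation sg.\<close>
definition sgm_dens :: "real \<Rightarrow> real \<Rightarrow> ('x \<Rightarrow> real^'n::finite) \<Rightarrow> 'x list \<Rightarrow> real^'n \<Rightarrow> real" where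
  "sgm_dens q sg f D = mix_dens (poisson_mask q (length D)) (masked_sum f D) (\<lambda>_. sg)"

definition valid_sgm_bound ::
  "(real \<Rightarrow> real \<Rightarrow> real \<Rightarrow> real) \<Rightarrow> 'x itself \<Rightarrow> 'n::finite itself \<Rightarrow> bool" where
  "valid_sgm_bound eps _ _ \<longleftrightarrow>
     (\<forall>lam q sg (f :: 'x \<Rightarrow> real^'n). lam > 1 \<and> 0 \<le> q \<and> q \<le> 1 \<and> sg > 0 \<and>
        (\<forall>x. norm (f x) \<le> 1) \<longrightarrow> rdp (sgm_dens q sg f) lam (eps lam q sg))"

text \<open>Coordinates of real^'n are partitioned into groups via grp.
  Group restriction and per-group clipping.\<close>
definition group_part :: "('n::finite \<Rightarrow> 'g) \<Rightarrow> 'g \<Rightarrow> real^'n \<Rightarrow> real^'n" where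
  "group_part grp g v = (\<chi> i. if grp i = g then v $ i else 0)"

definition clip_groups :: "('n::finite \<Rightarrow> 'g) \<Rightarrow> ('g \<Rightarrow> real) \<Rightarrow> real^'n \<Rightarrow> real^'n" where
  "clip_groups grp C v =
     (\<chi> i. v $ i / max 1 (norm (group_part grp (grp i) v) / C (grp i)))"

text \<open>Density of the joint release
  s~_t = beta * sum_i m_i clip(grad x_i) + b + Z,  Z ~ N(0, Sigma_t),
  Sigma_t = diag(sigma_g^2 C_g^2 I_g).  grad (per-example gradient at theta_t) and
  b (memory branch) are determined by the fixed history H_t.\<close>
definition sma_dens ::
  "real \<Rightarrow> ('n::finite \<Rightarrow> 'g) \<Rightarrow> ('g \<Rightarrow> real) \<Rightarrow> ('g \<Rightarrow> real) \<Rightarrow> ('x \<Rightarrow> real^'n)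
     \<Rightarrow> real^'n \<Rightarrow> real \<Rightarrow> 'x list \<Rightarrow> real^'n \<Rightarrow> real" where
  "sma_dens beta grp C sg grad b q D =
     mix_dens (poisson_mask q (length D))
       (\<lambda>m. beta *\<^sub>R masked_sum (\<lambda>x. clip_groups grp C (grad x)) D m + b)
       (\<lambda>i. sg (grp i) * C (grp i))"

definition sigma_eff :: "real \<Rightarrow> ('g::finite \<Rightarrow> real) \<Rightarrow> real" where
  "sigma_eff beta sg = 1 / (beta * sqrt (\<Sum>g\<in>UNIV. 1 / (sg g)\<^sup>2))"

end

theory Submission
  imports Defs
begin

lemma basis_real_vec: "(Basis :: (real^'n::finite) set) = range (\<lambda>i. axis i 1)"
  by (auto simp: Basis_vec_def)

lemma sum_axis_comp: "(\<Sum>k\<in>UNIV. h k *\<^sub>R axis k (1::real)) $ i = (h i :: real)"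
proof -
  have "(\<Sum>k\<in>UNIV. h k *\<^sub>R axis k (1::real)) $ i = (\<Sum>k\<in>UNIV. h k * (if i = k then 1 else 0))"
    by (simp add: axis_def)
  also have "\<dots> = (\<Sum>k\<in>UNIV. if i = k then h k else 0)"
    by (rule sum.cong) auto
  finally show ?thesis by simp
qed

lemma lborel_vec_affine:
  fixes t :: "real^'n::finite" and d :: "'n \<Rightarrow> real"
  assumes d: "\<And>i. d i \<noteq> 0"
  shows "lborel = density (distr lborel borel (\<lambda>x. t + (\<chi> i. d i * x$i))) (\<lambda>_. (\<Prod>i\<in>UNIV. \<bar>d i\<bar>))"
proof -
  define c where "c j = (\<Sum>i\<in>UNIV. d i * (j::real^'n) $ i)" for j
  have cax: "c (axis k 1) = d k" for k
    by (simp add: c_def axis_def if_distrib cong: if_cong)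
  have inj: "inj (\<lambda>i::'n. axis i (1::real))"
    by (auto simp: inj_def axis_eq_axis)
  have T: "(\<Sum>j\<in>Basis. (c j * (x \<bullet> j)) *\<^sub>R j) = (\<chi> i. d i * x$i)" for x :: "real^'n"
    unfolding basis_real_vec
    apply (subst sum.reindex[OF inj])
    apply (simp only: vec_eq_iff o_def)
    apply (subst sum_axis_comp)
    apply (simp add: cax inner_axis)
    done
  have P: "(\<Prod>j\<in>Basis. \<bar>c j\<bar>) = (\<Prod>i\<in>UNIV. \<bar>d i\<bar>)"
    unfolding basis_real_vec by (subst prod.reindex[OF inj]) (simp add: cax)
  have "lborel = density (distr lborel borel (\<lambda>x. t + (\<Sum>j\<in>Basis. (c j * (x \<bullet> j)) *\<^sub>R j))) (\<lambda>_. (\<Prod>j\<in>Basis. \<bar>c j\<bar>))"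
    by (rule lborel_affine_euclidean) (auto simp: basis_real_vec cax d)
  then show ?thesis unfolding T P .
qed

lemma renyi_div_affine:
  fixes P Q P' Q' :: "real^'n::finite \<Rightarrow> real" and t :: "real^'n"
  assumes d: "\<And>i. d i > 0"
    and [measurable]: "P \<in> borel_measurable borel" "Q \<in> borel_measurable borel"
    and PP: "\<And>x. P (t + (\<chi> i. d i * x$i)) = P' x / (\<Prod>i\<in>UNIV. d i)"
    and QQ: "\<And>x. Q (t + (\<chi> i. d i * x$i)) = Q' x / (\<Prod>i\<in>UNIV. d i)"
  shows "renyi_div lam P Q lborel = renyi_div lam P' Q' lborel"
proof -
  define K where "K = (\<Prod>i\<in>UNIV. d i)"
  have K: "K > 0" unfolding K_def using d by (simp add: prod_pos)
  have absK: "(\<Prod>i\<in>UNIV. \<bar>d i\<bar>) = K" unfolding K_def using d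
    by (intro prod.cong) (auto simp: less_imp_le)
  define T where "T x = t + (\<chi> i. d i * x$i)" for x :: "real^'n"
  have [measurable]: "T \<in> borel \<rightarrow>\<^sub>M borel"
    unfolding T_def by (rule borel_measurable_continuous_onI) (intro continuous_intros)
  define h where "h y = ennreal (P y powr lam * Q y powr (1 - lam))" for y
  have [measurable]: "h \<in> borel_measurable borel" unfolding h_def by measurable
  have eq: "lborel = density (distr lborel borel T) (\<lambda>_. K)"
    using lborel_vec_affine[of d t] d unfolding absK T_def by (metis less_irrefl)
  have "(\<integral>\<^sup>+ y. h y \<partial>lborel) = (\<integral>\<^sup>+ y. h y \<partial>density (distr lborel borel T) (\<lambda>_. K))"
    using eq by (rule arg_cong[where f="\<lambda>M. integral\<^sup>N M h"])
  also have "\<dots> = (\<integral>\<^sup>+ y. K * h y \<partial>distr lborel borel T)"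
    by (subst nn_integral_density) auto
  also have "\<dots> = (\<integral>\<^sup>+ x. K * h (T x) \<partial>lborel)"
    by (subst nn_integral_distr) auto
  also have "\<dots> = (\<integral>\<^sup>+ x. ennreal (P' x powr lam * Q' x powr (1 - lam)) \<partial>lborel)"
  proof (rule nn_integral_cong)
    fix x
    have a: "(P' x / K) powr lam = P' x powr lam * (1/K) powr lam"
      using powr_mult[of "P' x" "1/K" lam] by simp
    have b: "(Q' x / K) powr (1 - lam) = Q' x powr (1 - lam) * (1/K) powr (1 - lam)"
      using powr_mult[of "Q' x" "1/K" "1 - lam"] by simp
    have c: "(1/K) powr lam * (1/K) powr (1 - lam) = 1/K"
      using powr_add[of "1/K" lam "1 - lam", symmetric] K by simp
    have "K * ((P' x / K) powr lam * (Q' x / K) powr (1 - lam))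
        = (P' x powr lam * Q' x powr (1 - lam)) * (K * ((1/K) powr lam * (1/K) powr (1 - lam)))"
      by (simp only: a b mult_ac)
    also have "\<dots> = P' x powr lam * Q' x powr (1 - lam)"
      using K by (simp only: c) simp
    finally have e: "K * ((P' x / K) powr lam * (Q' x / K) powr (1 - lam)) = P' x powr lam * Q' x powr (1 - lam)" .
    have "ennreal K * h (T x) = ennreal (K * ((P' x / K) powr lam * (Q' x / K) powr (1 - lam)))"
      unfolding h_def T_def PP QQ K_def[symmetric] using K by (simp add: ennreal_mult')
    then show "ennreal K * h (T x) = ennreal (P' x powr lam * Q' x powr (1 - lam))"
      unfolding e .
  qed
  finally show ?thesis unfolding renyi_div_def h_def by simp
qed


lemma normal_density_affine':
  assumes d: "d > 0"
  shows "normal_density mu s (t + d * x) = normal_density ((mu - t) / d) (s / d) x / d"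
proof -
  have sq: "sqrt (2 * pi * (s / d)\<^sup>2) = sqrt (2 * pi * s\<^sup>2) / d"
    using d by (simp add: power_divide real_sqrt_divide real_sqrt_mult)
  have ex: "(x - (mu - t) / d)\<^sup>2 / (2 * (s / d)\<^sup>2) = (t + d * x - mu)\<^sup>2 / (2 * s\<^sup>2)"
  proof (cases "s = 0")
    case False
    then show ?thesis using d by (simp add: field_simps power2_eq_square)
  qed simp
  show ?thesis unfolding normal_density_def sq
    using d by (simp add: ex del: minus_divide_left)
qed

lemma gauss_dens_affine:
  assumes d: "\<And>i. d i > 0"
  shows "gauss_dens mu s (t + (\<chi> i. d i * x$i))
       = gauss_dens (\<chi> i. (mu$i - t$i) / d i) (\<lambda>i. s i / d i) x / (\<Prod>i\<in>UNIV. d i)"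
  unfolding gauss_dens_def using d
  by (simp add: normal_density_affine' prod_dividef)

lemma mix_dens_affine:
  assumes d: "\<And>i. d i > 0"
  shows "mix_dens pm mean s (t + (\<chi> i. d i * x$i))
       = mix_dens pm (\<lambda>m. \<chi> i. (mean m $ i - t$i) / d i) (\<lambda>i. s i / d i) x / (\<Prod>i\<in>UNIV. d i)"
  unfolding mix_dens_def gauss_dens_affine[OF d] by simp

lemma gauss_dens_meas[measurable]: "gauss_dens mu s \<in> borel_measurable borel"
  unfolding gauss_dens_def[abs_def] by measurable

lemma mix_dens_meas:
  assumes "finite (set_pmf pm)"
  shows "mix_dens pm mean s \<in> borel_measurable borel"
proof -
  have "mix_dens pm mean s = (\<lambda>y. \<Sum>a\<in>set_pmf pm. gauss_dens (mean a) s y * pmf pm a)"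
    by (rule ext) (simp add: mix_dens_def integral_measure_pmf_real[OF assms])
  then show ?thesis by simp
qed

lemma finite_mask: "finite (set_pmf (poisson_mask q N))"
  unfolding poisson_mask_def
  by (rule finite_subset[OF set_Pi_pmf_subset']) auto


lemma clip_group_bound:
  assumes C: "C g > 0"
  shows "(\<Sum>i\<in>UNIV. if grp i = g then (clip_groups grp C v $ i)\<^sup>2 else 0) \<le> (C g)\<^sup>2"
proof -
  define N where "N = norm (group_part grp g v)"
  define M where "M = max 1 (N / C g)"
  have M: "M > 0" "M \<ge> N / C g" unfolding M_def by auto
  have N0: "N \<ge> 0" unfolding N_def by simp
  have N2: "N\<^sup>2 = (\<Sum>i\<in>UNIV. if grp i = g then (v$i)\<^sup>2 else 0)"
    unfolding N_def power2_norm_eq_inner inner_vec_def group_part_def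
    by (rule sum.cong) (auto simp: power2_eq_square)
  have "(\<Sum>i\<in>UNIV. if grp i = g then (clip_groups grp C v $ i)\<^sup>2 else 0)
      = (\<Sum>i\<in>UNIV. (if grp i = g then (v$i)\<^sup>2 else 0) / M\<^sup>2)"
    unfolding clip_groups_def
    by (rule sum.cong) (auto simp: M_def N_def power_divide)
  also have "\<dots> = (N / M)\<^sup>2" by (simp add: N2 power_divide sum_divide_distrib)
  also have "\<dots> \<le> (C g)\<^sup>2"
  proof (rule power_mono)
    show "N / M \<le> C g" using M C by (simp add: divide_le_eq field_simps)
    show "0 \<le> N / M" using M N0 by simp
  qed
  finally show ?thesis .
qed

lemma f_norm_bound:
  fixes grp :: "'n::finite \<Rightarrow> 'g::finite" and w :: "real^'n"
  assumes beta: "beta > 0" and C: "\<And>g. C g > 0" and sg: "\<And>g. sg g > 0"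
    and W: "\<And>g. (\<Sum>i\<in>UNIV. if grp i = g then (w $ i)\<^sup>2 else 0) \<le> (C g)\<^sup>2"
  shows "norm (\<chi> i. beta * w$i / (sg (grp i) * C (grp i) / sigma_eff beta sg)) \<le> 1"
proof -
  define S where "S = (\<Sum>g\<in>UNIV. 1 / (sg g)\<^sup>2)"
  have sgn0: "sg g \<noteq> 0" for g using sg[of g] by linarith
  have S: "S > 0" unfolding S_def using sg sgn0 by (intro sum_pos) auto
  define e where "e = sigma_eff beta sg"
  have e2: "e\<^sup>2 = 1 / (beta\<^sup>2 * S)"
    unfolding e_def sigma_eff_def S_def[symmetric] using S
    by (simp add: power_divide power_mult_distrib)
  define a where "a g = beta\<^sup>2 * e\<^sup>2 / ((sg g)\<^sup>2 * (C g)\<^sup>2)" for g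
  have a0: "a g \<ge> 0" for g unfolding a_def by simp
  have "(norm (\<chi> i. beta * w$i / (sg (grp i) * C (grp i) / e)))\<^sup>2
      = (\<Sum>i\<in>UNIV. a (grp i) * (w$i)\<^sup>2)"
    unfolding power2_norm_eq_inner inner_vec_def a_def
    using sg C by (intro sum.cong) (auto simp: power2_eq_square field_simps)
  also have "\<dots> = (\<Sum>i\<in>UNIV. \<Sum>g\<in>UNIV. if grp i = g then a g * (w$i)\<^sup>2 else 0)"
    by (rule sum.cong) (auto simp: if_distrib cong: if_cong)
  also have "\<dots> = (\<Sum>g\<in>UNIV. a g * (\<Sum>i\<in>UNIV. if grp i = g then (w$i)\<^sup>2 else 0))"
    by (subst sum.swap) (auto simp: sum_distrib_left if_distrib intro!: sum.cong)
  also have "\<dots> \<le> (\<Sum>g\<in>UNIV. a g * (C g)\<^sup>2)"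
    by (intro sum_mono mult_left_mono W a0)
  also have "\<dots> = beta\<^sup>2 * e\<^sup>2 * S"
    unfolding a_def S_def using C by (auto simp: sum_distrib_left field_simps less_imp_neq[OF C, symmetric] intro!: sum.cong)
  also have "\<dots> = 1" using e2 S beta by simp
  finally have "(norm (\<chi> i. beta * w$i / (sg (grp i) * C (grp i) / e)))\<^sup>2 \<le> 1\<^sup>2" by simp
  then show ?thesis unfolding e_def by (rule power2_le_imp_le) simp
qed


theorem theoremB2:
  fixes beta q :: real
    and grp :: "'n::finite \<Rightarrow> 'g::finite"
    and C sg :: "'g \<Rightarrow> real"
    and grad :: "'x \<Rightarrow> real^'n"
    and b :: "real^'n"
    and eps :: "real \<Rightarrow> real \<Rightarrow> real \<Rightarrow> real"
  assumes "0 < beta" and "beta \<le> 1"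
    and "0 \<le> q" and "q \<le> 1"
    and "\<forall>g. C g > 0" and "\<forall>g. sg g > 0"
    and "valid_sgm_bound eps TYPE('x) TYPE('n)"
  shows "\<forall>lam > 1. rdp (sma_dens beta grp C sg grad b q) lam
                        (eps lam q (sigma_eff beta sg))"
proof (intro allI impI)
  fix lam :: real assume lam: "lam > 1"
  have beta: "beta > 0" and C: "\<And>g. C g > 0" and sg: "\<And>g. sg g > 0"
    using assms by auto
  define e where "e = sigma_eff beta sg"
  define S where "S = (\<Sum>g\<in>UNIV. 1 / (sg g)\<^sup>2)"
  have sgn0: "sg g \<noteq> 0" for g using sg[of g] by linarith
  have S: "S > 0" unfolding S_def using sg sgn0 by (intro sum_pos) auto
  have e: "e > 0" unfolding e_def sigma_eff_def S_def[symmetric] using S beta by simp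
  define s where "s i = sg (grp i) * C (grp i)" for i
  have s: "s i > 0" for i unfolding s_def using sg C by simp
  define d where "d i = s i / e" for i
  have d: "d i > 0" for i unfolding d_def using s e by simp
  define f where "f x = (\<chi> i. beta * clip_groups grp C (grad x) $ i / d i)" for x
  have fn: "norm (f x) \<le> 1" for x
    unfolding f_def d_def s_def e_def
    by (rule f_norm_bound[OF beta C sg]) (rule clip_group_bound[where C=C, OF C])
  have sgm: "rdp (sgm_dens q e f) lam (eps lam q e)"
    using assms(7) lam assms(3,4) e fn unfolding valid_sgm_bound_def by blast
  have key: "sma_dens beta grp C sg grad b q D (b + (\<chi> i. d i * x$i))
           = sgm_dens q e f D x / (\<Prod>i\<in>UNIV. d i)" for D x
  proof -
    have sd: "(\<lambda>i. s i / d i) = (\<lambda>_. e)"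
      using s e unfolding d_def by (auto simp: field_simps less_imp_neq[OF s, symmetric])
    have ms: "(\<lambda>m. \<chi> i. ((beta *\<^sub>R masked_sum (\<lambda>x. clip_groups grp C (grad x)) D m + b) $ i - b $ i) / d i)
            = masked_sum f D"
      unfolding masked_sum_def f_def
      by (rule ext) (auto simp: vec_eq_iff sum_distrib_left sum_divide_distrib intro!: sum.cong)
    show ?thesis
      unfolding sma_dens_def sgm_dens_def mix_dens_affine[OF d]
      unfolding s_def[symmetric] sd ms ..
  qed
  show "rdp (sma_dens beta grp C sg grad b q) lam (eps lam q (sigma_eff beta sg))"
    unfolding rdp_def
  proof (intro allI impI)
    fix D D' :: "'x list" assume adj: "adjacent D D'"
    have "renyi_div lam (sma_dens beta grp C sg grad b q D) (sma_dens beta grp C sg grad b q D') lborel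
        = renyi_div lam (sgm_dens q e f D) (sgm_dens q e f D') lborel"
      by (rule renyi_div_affine[where d=d and t=b and P="sma_dens beta grp C sg grad b q D"
            and Q="sma_dens beta grp C sg grad b q D'" and P'="sgm_dens q e f D" and Q'="sgm_dens q e f D'"])
        (simp_all only: d key, auto simp: sma_dens_def intro!: mix_dens_meas finite_mask)
    also have "\<dots> \<le> ereal (eps lam q e)"
      using sgm adj unfolding rdp_def by blast
    finally show "renyi_div lam (sma_dens beta grp C sg grad b q D) (sma_dens beta grp C sg grad b q D') lborel
        \<le> ereal (eps lam q (sigma_eff beta sg))" unfolding e_def .
  qed
qed

end
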